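(* For every expansive homeomorphism $f$ of a compact metrizable space $X$ there is a metric $\mathrm{d}$ on $X$ defining its topology such that $f$ is a bi-Lipschitz homeomorphism of $(X,\mathrm{d})$ and $f$ is $\mathrm{d}_W$-robustly expansive, i.e. there are $\epsilon,\delta>0$ such that every bi-Lipschitz homeomorphism $g$ of $(X,\mathrm{d})$ with $\mathrm{d}_W(f,g)<\epsilon$ is expansive with expansive constant $\delta$.
   Context: A homeomorphism $g$ of a compact metric space $(X,\mathrm{d})$ is expansive with expansive constant $\delta>0$ if $\mathrm{d}(g^n(x),g^n(y))\le\delta$ for all $n\in\mathbb Z$ implies $x=y$; $f$ is expansive if it is so for some metric defining the topology and some $\delta$. $\mathrm{d}_{C^0}(f,g)=\max_{x}\mathrm{d}(f(x),g(x))+\max_x\mathrm{d}(f^{-1}(x),g^{-1}(x))$; $\mathrm{d}'_W(f,g)=\sup_{x\ne y}\frac{|\mathrm{d}(f(x),f(y))-\mathrm{d}(g(x),g(y))|}{\mathrm{d}(x,y)}$; $\mathrm{d}_W(f,g)=\mathrm{d}_{C^0}(f,g)+\mathrm{d}'_W(f,g)+\mathrm{d}'_W(f^{-1},g^{-1})$ for bi-Lipschitz homeomorphisms $f,g$. *)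

theory Defs
  imports "HOL-Analysis.Analysis"
begin

definition iter_int :: "'a set \<Rightarrow> ('a \<Rightarrow> 'a) \<Rightarrow> int \<Rightarrow> 'a \<Rightarrow> 'a" where
  "iter_int M g n = (if 0 \<le> n then g ^^ nat n else (inv_into M g) ^^ nat (- n))"

definition expansive_const :: "'a set \<Rightarrow> ('a \<Rightarrow> 'a \<Rightarrow> real) \<Rightarrow> ('a \<Rightarrow> 'a) \<Rightarrow> real \<Rightarrow> bool" where
  "expansive_const M d g \<delta> \<longleftrightarrow> 0 < \<delta> \<and>
     (\<forall>x\<in>M. \<forall>y\<in>M. (\<forall>n::int. d (iter_int M g n x) (iter_int M g n y) \<le> \<delta>) \<longrightarrow> x = y)"

definition expansive_homeo :: "'a topology \<Rightarrow> ('a \<Rightarrow> 'a) \<Rightarrow> bool" where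
  "expansive_homeo X f \<longleftrightarrow> homeomorphic_map X X f \<and>
     (\<exists>d \<delta>. Metric_space (topspace X) d \<and> Metric_space.mtopology (topspace X) d = X \<and>
            expansive_const (topspace X) d f \<delta>)"

definition lipschitz_on_metric :: "'a set \<Rightarrow> ('a \<Rightarrow> 'a \<Rightarrow> real) \<Rightarrow> ('a \<Rightarrow> 'a) \<Rightarrow> bool" where
  "lipschitz_on_metric M d g \<longleftrightarrow> (\<exists>L. \<forall>x\<in>M. \<forall>y\<in>M. d (g x) (g y) \<le> L * d x y)"

definition bilip_homeo :: "'a set \<Rightarrow> ('a \<Rightarrow> 'a \<Rightarrow> real) \<Rightarrow> ('a \<Rightarrow> 'a) \<Rightarrow> bool" where
  "bilip_homeo M d g \<longleftrightarrow> bij_betw g M M \<and> lipschitz_on_metric M d g \<and>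
     lipschitz_on_metric M d (inv_into M g)"

definition dC0 :: "'a set \<Rightarrow> ('a \<Rightarrow> 'a \<Rightarrow> real) \<Rightarrow> ('a \<Rightarrow> 'a) \<Rightarrow> ('a \<Rightarrow> 'a) \<Rightarrow> real" where
  "dC0 M d f g = (SUP x\<in>M. d (f x) (g x)) + (SUP x\<in>M. d (inv_into M f x) (inv_into M g x))"

definition dW' :: "'a set \<Rightarrow> ('a \<Rightarrow> 'a \<Rightarrow> real) \<Rightarrow> ('a \<Rightarrow> 'a) \<Rightarrow> ('a \<Rightarrow> 'a) \<Rightarrow> real" where
  "dW' M d f g = (SUP p\<in>{(x,y). x \<in> M \<and> y \<in> M \<and> x \<noteq> y}.
      \<bar>d (f (fst p)) (f (snd p)) - d (g (fst p)) (g (snd p))\<bar> / d (fst p) (snd p))"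

definition dW :: "'a set \<Rightarrow> ('a \<Rightarrow> 'a \<Rightarrow> real) \<Rightarrow> ('a \<Rightarrow> 'a) \<Rightarrow> ('a \<Rightarrow> 'a) \<Rightarrow> real" where
  "dW M d f g = dC0 M d f g + dW' M d f g + dW' M d (inv_into M f) (inv_into M g)"

end

theory Submission
  imports Defs
begin


lemma sum_split_add: "(\<Sum>i<m+(l::nat). g i) = (\<Sum>i<m. g i) + (\<Sum>i<l. g (m+i)::real)"
  by (induction l) (auto simp: add.assoc)

lemma funpow_in: "h ` M \<subseteq> M \<Longrightarrow> x \<in> M \<Longrightarrow> (h ^^ n) x \<in> M"
  by (induct n) auto

lemma inv_maps: "bij_betw h M M \<Longrightarrow> inv_into M h ` M \<subseteq> M"
  by (metis bij_betw_def image_subsetI inv_into_into)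

lemma iter_int_in:
  assumes "bij_betw h M M" "x \<in> M" shows "iter_int M h n x \<in> M"
  using assms funpow_in[of h M] funpow_in[of "inv_into M h" M] inv_maps[OF assms(1)]
  unfolding iter_int_def by (auto simp: bij_betw_def)

lemma iter_int_succ:
  assumes b: "bij_betw h M M" and x: "x \<in> M"
  shows "iter_int M h (n+1) x = h (iter_int M h n x)"
proof (cases "0 \<le> n")
  case True then have "nat (n+1) = Suc (nat n)" by simp
  then show ?thesis using True by (simp add: iter_int_def)
next
  case False
  define m where "m = nat (-(n+1))"
  have n1: "nat (-n) = Suc m" using False by (simp add: m_def)
  have e1: "iter_int M h (n+1) x = (inv_into M h ^^ m) x"
    using False by (auto simp: iter_int_def m_def)
  have inM: "(inv_into M h ^^ m) x \<in> M" using funpow_in[OF inv_maps[OF b] x] .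
  have "iter_int M h n x = inv_into M h ((inv_into M h ^^ m) x)"
    using False n1 by (simp add: iter_int_def)
  moreover have "h (inv_into M h ((inv_into M h ^^ m) x)) = (inv_into M h ^^ m) x"
    using inM b by (metis bij_betw_def f_inv_into_f)
  ultimately show ?thesis using e1 by simp
qed

lemma iter_int_pred:
  assumes b: "bij_betw h M M" and x: "x \<in> M"
  shows "iter_int M h (n-1) x = inv_into M h (iter_int M h n x)"
proof -
  have "iter_int M h n x = h (iter_int M h (n-1) x)"
    using iter_int_succ[OF b x, of "n-1"] by simp
  then show ?thesis using iter_int_in[OF b x, of "n-1"] b
    by (metis bij_betw_def inv_into_f_f)
qed

lemma iter_int_0[simp]: "iter_int M h 0 = id"
  by (simp add: iter_int_def)

lemma iter_int_1: "iter_int M h 1 = h"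
  by (simp add: iter_int_def)

lemma iter_int_m1: "iter_int M h (-1) = inv_into M h"
  by (simp add: iter_int_def)

lemma iter_int_comp:
  assumes b: "bij_betw h M M" and x: "x \<in> M"
  shows "iter_int M h m (iter_int M h n x) = iter_int M h (m+n) x"
proof (induct m rule: int_induct[where k=0])
  case base then show ?case by simp
next
  case (step1 i)
  then show ?case
    using iter_int_succ[OF b iter_int_in[OF b x], of i] iter_int_succ[OF b x, of "i+n"]
    by (simp add: add.commute add.left_commute)
next
  case (step2 i)
  then show ?case
    using iter_int_pred[OF b iter_int_in[OF b x], of i] iter_int_pred[OF b x, of "i+n"]
    by (simp add: algebra_simps)
qed

lemma continuous_map_funpow:
  "continuous_map X X h \<Longrightarrow> continuous_map X X (h ^^ n)"
  by (induct n) (auto intro: continuous_map_compose)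

lemma iter_int_cont:
  assumes "continuous_map X X h" "continuous_map X X (inv_into M h)"
  shows "continuous_map X X (iter_int M h n)"
  using assms continuous_map_funpow unfolding iter_int_def by auto



locale expsetup = Metric_space M d0 for M d0 +
  fixes f :: "'a \<Rightarrow> 'a" and c :: real
  assumes bij: "bij_betw f M M"
  and contf: "continuous_map mtopology mtopology f"
  and contfi: "continuous_map mtopology mtopology (inv_into M f)"
  and cpt: "compact_space mtopology"
  and expc: "expansive_const M d0 f c"
begin

abbreviation "F \<equiv> iter_int M f"

lemma cpos: "c > 0" using expc by (simp add: expansive_const_def)

lemma F_in: "x \<in> M \<Longrightarrow> F n x \<in> M" using iter_int_in[OF bij] .
lemma F_comp: "x \<in> M \<Longrightarrow> F m (F n x) = F (m+n) x" using iter_int_comp[OF bij] .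
lemma F_cont: "continuous_map mtopology mtopology (F n)"
  using iter_int_cont[OF contf contfi] .

lemma F_f: "x \<in> M \<Longrightarrow> F n (f x) = F (n+1) x"
  using F_comp[of x n 1] by (simp add: iter_int_1)
lemma F_fi: "x \<in> M \<Longrightarrow> F n (inv_into M f x) = F (n-1) x"
  using F_comp[of x n "-1"] by (simp add: iter_int_m1)

lemma unif:
  assumes e: "e > 0"
  shows "\<exists>m::nat. \<forall>x\<in>M. \<forall>y\<in>M. (\<forall>k::int. \<bar>k\<bar> \<le> int m \<longrightarrow> d0 (F k x) (F k y) \<le> c) \<longrightarrow> d0 x y \<le> e"
proof (rule ccontr)
  assume "\<not> ?thesis"
  then have "\<forall>m::nat. \<exists>x y. x\<in>M \<and> y\<in>M \<and> (\<forall>k::int. \<bar>k\<bar> \<le> int m \<longrightarrow> d0 (F k x) (F k y) \<le> c) \<and> d0 x y > e"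
    by (simp add: not_le) blast
  then obtain X Y where XY: "\<And>m. X m \<in> M \<and> Y m \<in> M \<and> (\<forall>k::int. \<bar>k\<bar> \<le> int m \<longrightarrow> d0 (F k (X m)) (F k (Y m)) \<le> c) \<and> d0 (X m) (Y m) > e"
    by metis
  have seqc: "\<forall>\<sigma>::nat\<Rightarrow>'a. range \<sigma> \<subseteq> M \<longrightarrow> (\<exists>l r. l \<in> M \<and> strict_mono r \<and> limitin mtopology (\<sigma> \<circ> r) l sequentially)"
    using cpt compact_space_sequentially by blast
  obtain l r where l: "l \<in> M" "strict_mono r" "limitin mtopology (X \<circ> r) l sequentially"
    using seqc XY by (metis image_subsetI)
  obtain l' r' where l': "l' \<in> M" "strict_mono r'" "limitin mtopology ((Y \<circ> r) \<circ> r') l' sequentially"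
    using seqc[rule_format, of "Y \<circ> r"] XY by auto
  define q where "q = r \<circ> r'"
  have q: "strict_mono q" using l(2) l'(2) by (simp add: q_def strict_mono_o)
  have LX: "limitin mtopology (X \<circ> q) l sequentially"
    using limitin_subsequence[OF l'(2) l(3)] by (simp add: q_def o_assoc)
  have LY: "limitin mtopology (Y \<circ> q) l' sequentially"
    using l'(3) by (simp add: q_def o_assoc)
  have "\<forall>k. d0 (F k l) (F k l') \<le> c"
  proof (rule ccontr)
    assume "\<not> ?thesis"
    then obtain k where k: "d0 (F k l) (F k l') > c" by (auto simp: not_le)
    define \<epsilon> where "\<epsilon> = (d0 (F k l) (F k l') - c) / 2"
    have ep: "\<epsilon> > 0" using k by (simp add: \<epsilon>_def)
    have "limitin mtopology (F k \<circ> (X \<circ> q)) (F k l) sequentially"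
      by (rule continuous_map_limit[OF F_cont LX])
    then have E1: "eventually (\<lambda>j. d0 (F k (X (q j))) (F k l) < \<epsilon>) sequentially"
      using ep unfolding limitin_metric by (auto elim: eventually_mono)
    have "limitin mtopology (F k \<circ> (Y \<circ> q)) (F k l') sequentially"
      by (rule continuous_map_limit[OF F_cont LY])
    then have E2: "eventually (\<lambda>j. d0 (F k (Y (q j))) (F k l') < \<epsilon>) sequentially"
      using ep unfolding limitin_metric by (auto elim: eventually_mono)
    have E3: "eventually (\<lambda>j. \<bar>k\<bar> \<le> int (q j)) sequentially"
    proof -
      have "eventually (\<lambda>j. nat \<bar>k\<bar> \<le> j) sequentially" by (rule eventually_ge_at_top)
      then show ?thesis
        by (rule eventually_mono) (use seq_suble[OF q] in \<open>metis le_trans nat_le_iff\<close>)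
    qed
    obtain j where j: "d0 (F k (X (q j))) (F k l) < \<epsilon>" "d0 (F k (Y (q j))) (F k l') < \<epsilon>" "\<bar>k\<bar> \<le> int (q j)"
      using eventually_happens'[OF _ eventually_conj[OF E1 eventually_conj[OF E2 E3]]] by auto
    have inM: "F k (X (q j)) \<in> M" "F k (Y (q j)) \<in> M" "F k l \<in> M" "F k l' \<in> M"
      using F_in XY l l' by auto
    have "d0 (F k l) (F k l') \<le> d0 (F k l) (F k (X (q j))) + d0 (F k (X (q j))) (F k (Y (q j))) + d0 (F k (Y (q j))) (F k l')"
      using triangle inM by (smt (verit))
    also have "\<dots> < \<epsilon> + c + \<epsilon>"
      using j XY[of "q j"] by (smt (verit) commute)
    finally show False by (simp add: \<epsilon>_def)
  qed
  then have "l = l'" using expc l l' by (auto simp: expansive_const_def)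
  have ee: "e/2 > 0" using e by simp
  have "eventually (\<lambda>j. (X \<circ> q) j \<in> M \<and> d0 ((X \<circ> q) j) l < e/2) sequentially"
    using LX ee unfolding limitin_metric by blast
  then have E1: "eventually (\<lambda>j. d0 (X (q j)) l < e/2) sequentially"
    by (rule eventually_mono) simp
  have "eventually (\<lambda>j. (Y \<circ> q) j \<in> M \<and> d0 ((Y \<circ> q) j) l' < e/2) sequentially"
    using LY ee unfolding limitin_metric by blast
  then have E2: "eventually (\<lambda>j. d0 (Y (q j)) l' < e/2) sequentially"
    by (rule eventually_mono) simp
  obtain j where j: "d0 (X (q j)) l < e/2" "d0 (Y (q j)) l' < e/2"
    using eventually_happens'[OF _ eventually_conj[OF E1 E2]] by auto
  have "d0 (X (q j)) (Y (q j)) \<le> d0 (X (q j)) l + d0 l (Y (q j))"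
    using triangle XY l by blast
  then have "d0 (X (q j)) (Y (q j)) < e" using j \<open>l = l'\<close> commute[of l "Y (q j)"] by simp
  then show False using XY[of "q j"] by simp
qed

end


locale expsetup2 = expsetup +
  fixes M0 :: nat and s :: real
  assumes unifM0: "\<forall>x\<in>M. \<forall>y\<in>M. (\<forall>k::int. \<bar>k\<bar> \<le> int M0 \<longrightarrow> d0 (F k x) (F k y) \<le> c) \<longrightarrow> d0 x y \<le> c/2"
  and s0: "0 < s" and s1: "s < 1" and sM: "s^(4*M0) \<ge> 1/2"
begin

definition Nn where "Nn x y = (LEAST n. \<exists>k::int. \<bar>k\<bar> \<le> int n \<and> d0 (F k x) (F k y) > c/2)"
definition close where "close m x y \<longleftrightarrow> (\<forall>k::int. \<bar>k\<bar> < int m \<longrightarrow> d0 (F k x) (F k y) \<le> c/2)"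
definition rho where "rho x y = (if x = y then 0 else s^(2 * Nn x y))"

lemma Nn_ex:
  assumes "x \<in> M" "y \<in> M" "x \<noteq> y"
  shows "\<exists>e. \<bar>e\<bar> = int (Nn x y) \<and> d0 (F e x) (F e y) > c/2"
proof -
  obtain k where k: "d0 (F k x) (F k y) > c"
    using expc assms unfolding expansive_const_def by (meson not_le)
  then have P: "\<exists>n. \<exists>k'::int. \<bar>k'\<bar> \<le> int n \<and> d0 (F k' x) (F k' y) > c/2"
    using cpos by (intro exI[of _ "nat \<bar>k\<bar>"] exI[of _ k]) auto
  from LeastI_ex[OF P] obtain e where e: "\<bar>e\<bar> \<le> int (Nn x y)" "d0 (F e x) (F e y) > c/2"
    unfolding Nn_def by blast
  have "Nn x y \<le> nat \<bar>e\<bar>" unfolding Nn_def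
    by (rule Least_le) (use e in auto)
  then show ?thesis using e by (intro exI[of _ e]) auto
qed

lemma close_Nn: "close (Nn x y) x y"
  unfolding close_def
proof (intro allI impI)
  fix k :: int assume k: "\<bar>k\<bar> < int (Nn x y)"
  show "d0 (F k x) (F k y) \<le> c/2"
  proof (rule ccontr)
    assume "\<not> ?thesis"
    then have "Nn x y \<le> nat \<bar>k\<bar>" unfolding Nn_def
      by (intro Least_le) (auto intro!: exI[of _ k])
    then show False using k by linarith
  qed
qed

lemma Nn_ge:
  assumes "x \<in> M" "y \<in> M" "x \<noteq> y" "close P x y" shows "P \<le> Nn x y"
proof (rule ccontr)
  assume "\<not> ?thesis"
  obtain e where e: "\<bar>e\<bar> = int (Nn x y)" "d0 (F e x) (F e y) > c/2" using Nn_ex assms by blast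
  then have "\<bar>e\<bar> < int P" using \<open>\<not> P \<le> Nn x y\<close> by linarith
  then have "d0 (F e x) (F e y) \<le> c/2" using assms(4) unfolding close_def by blast
  then show False using e by simp
qed

lemma close_mono: "close m x y \<Longrightarrow> n \<le> m \<Longrightarrow> close n x y"
  unfolding close_def by force

lemma close_trans:
  assumes xyz: "x \<in> M" "y \<in> M" "z \<in> M" and c1: "close m x y" and c2: "close m y z"
  shows "close (m - M0) x z"
  unfolding close_def
proof (intro allI impI)
  fix j :: int assume j: "\<bar>j\<bar> < int (m - M0)"
  have "\<forall>k::int. \<bar>k\<bar> \<le> int M0 \<longrightarrow> d0 (F k (F j x)) (F k (F j z)) \<le> c"
  proof (intro allI impI)
    fix k :: int assume k: "\<bar>k\<bar> \<le> int M0"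
    have kj: "\<bar>k + j\<bar> < int m" using j k by linarith
    have "d0 (F (k+j) x) (F (k+j) z) \<le> d0 (F (k+j) x) (F (k+j) y) + d0 (F (k+j) y) (F (k+j) z)"
      using triangle F_in xyz by blast
    also have "\<dots> \<le> c/2 + c/2" using c1 c2 kj unfolding close_def by (meson add_mono)
    finally show "d0 (F k (F j x)) (F k (F j z)) \<le> c" using F_comp xyz by simp
  qed
  then show "d0 (F j x) (F j z) \<le> c/2" using unifM0 F_in xyz by blast
qed

lemma close_shift:
  assumes "x \<in> M" "y \<in> M" "close m x y"
  shows "close (m - nat \<bar>j\<bar>) (F j x) (F j y)"
  unfolding close_def
proof (intro allI impI)
  fix k :: int assume k: "\<bar>k\<bar> < int (m - nat \<bar>j\<bar>)"
  then have "\<bar>k + j\<bar> < int m" by linarith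
  then show "d0 (F k (F j x)) (F k (F j y)) \<le> c/2"
    using assms F_comp unfolding close_def by simp
qed

lemma Nn_sym: "Nn x y = Nn y x"
  unfolding Nn_def by (simp add: commute)

lemma rho_sym: "rho x y = rho y x"
  unfolding rho_def by (simp add: Nn_sym eq_commute)

lemma rho_nonneg: "rho x y \<ge> 0"
  unfolding rho_def using s0 by simp

lemma rho_le1: "rho x y \<le> 1"
  unfolding rho_def using s0 s1 by (simp add: power_le_one)

lemma rho_zero[simp]: "rho x x = 0" unfolding rho_def by simp

lemma rho_pos: "x \<noteq> y \<Longrightarrow> rho x y > 0" unfolding rho_def using s0 by simp

lemma rho_le:
  assumes "x \<in> M" "y \<in> M" "close m x y" shows "rho x y \<le> s^(2*m)"
proof (cases "x = y")
  case True then show ?thesis using s0 by (simp add: rho_def)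
next
  case False
  then have "m \<le> Nn x y" using Nn_ge assms by blast
  then show ?thesis using False s0 s1 by (simp add: rho_def power_decreasing)
qed

lemma rho_close:
  assumes "x \<in> M" "y \<in> M" "rho x y \<le> s^(2*m)" shows "close m x y"
proof (cases "x = y")
  case True then show ?thesis using cpos F_in assms by (simp add: close_def)
next
  case False
  then have "s^(2*Nn x y) \<le> s^(2*m)" using assms by (simp add: rho_def)
  then have "m \<le> Nn x y" using s0 s1 by (simp add: power_decreasing_iff)
  then show ?thesis using close_Nn close_mono by blast
qed

lemma rho_tri:
  assumes "x \<in> M" "y \<in> M" "z \<in> M" "w \<in> M"
  shows "rho x w \<le> 2 * max (rho x y) (max (rho y z) (rho z w))"
proof -
  define r where "r = max (rho x y) (max (rho y z) (rho z w))"
  show ?thesis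
  proof (cases "r = 0")
    case True
    have "rho x y \<le> r" "rho y z \<le> r" "rho z w \<le> r" by (simp_all add: r_def)
    then have "rho x y = 0" "rho y z = 0" "rho z w = 0" using True rho_nonneg
      by (meson order_antisym)+
    then have "x = y" "y = z" "z = w" using rho_pos by (metis less_irrefl)+
    then show ?thesis by simp
  next
    case False
    have ex: "rho a b \<noteq> 0 \<Longrightarrow> \<exists>m. rho a b = s^(2*m)" for a b
      unfolding rho_def by (auto split: if_splits)
    have "r = rho x y \<or> r = rho y z \<or> r = rho z w" unfolding r_def max_def by auto
    then have "\<exists>m. r = s^(2*m)" using ex False by auto
    then obtain m where m: "r = s^(2*m)" by blast
    have "rho x y \<le> s^(2*m)" "rho y z \<le> s^(2*m)" "rho z w \<le> s^(2*m)"
      using m unfolding r_def by linarith+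
    then have "close m x y" "close m y z" "close m z w"
      using rho_close assms by blast+
    then have "close (m - M0) x z" using close_trans assms by blast
    moreover have "close (m - M0) z w" using \<open>close m z w\<close> close_mono by simp
    ultimately have "close (m - M0 - M0) x w" using close_trans assms by blast
    then have "rho x w \<le> s^(2*(m - M0 - M0))" using rho_le assms by blast
    also have "\<dots> \<le> 2 * s^(2*m)"
    proof (cases "m \<ge> 2*M0")
      case True
      then have "2*m = 2*(m - M0 - M0) + 4*M0" by simp
      then have "s^(2*m) = s^(2*(m - M0 - M0)) * s^(4*M0)" by (metis power_add)
      have "s^(2*(m - M0 - M0)) * 1 \<le> s^(2*(m - M0 - M0)) * (2 * s^(4*M0))"
        by (rule mult_left_mono) (use sM s0 in auto)
      then show ?thesis using \<open>s^(2*m) = _\<close> by (simp add: algebra_simps)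
    next
      case False
      then have "m - M0 - M0 = 0" by simp
      moreover have "s^(4*M0) \<le> s^(2*m)" using False s0 s1 by (intro power_decreasing) auto
      ultimately show ?thesis using sM by simp
    qed
    finally show ?thesis using m r_def by simp
  qed
qed

end


locale frink =
  fixes M :: "'a set" and rho :: "'a \<Rightarrow> 'a \<Rightarrow> real"
  assumes rnn: "\<And>x y. rho x y \<ge> 0" and rsym: "\<And>x y. rho x y = rho y x"
  and rzero: "\<And>x. rho x x = 0" and rpos: "\<And>x y. x \<noteq> y \<Longrightarrow> rho x y > 0"
  and rtri: "\<And>x y z w. x\<in>M \<Longrightarrow> y\<in>M \<Longrightarrow> z\<in>M \<Longrightarrow> w\<in>M \<Longrightarrow>
      rho x w \<le> 2 * max (rho x y) (max (rho y z) (rho z w))"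
begin

definition cost :: "(nat \<Rightarrow> 'a) \<Rightarrow> nat \<Rightarrow> real" where
  "cost p n = (\<Sum>i<n. rho (p i) (p (Suc i)))"
definition chain :: "'a \<Rightarrow> 'a \<Rightarrow> (nat \<Rightarrow> 'a) \<Rightarrow> nat \<Rightarrow> bool" where
  "chain x y p n \<longleftrightarrow> p 0 = x \<and> p n = y \<and> (\<forall>i\<le>n. p i \<in> M)"
definition D where "D x y = Inf {cost p n | p n. chain x y p n}"

lemma cost_nonneg: "cost p n \<ge> 0"
  unfolding cost_def by (simp add: rnn sum_nonneg)

lemma frink: "(\<forall>i\<le>n. p i \<in> M) \<Longrightarrow> rho (p 0) (p n) \<le> 2 * cost p n"
proof (induction n arbitrary: p rule: less_induct)
  case (less n p)
  show ?case
  proof (cases "n = 0")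
    case True then show ?thesis by (simp add: rzero cost_def)
  next
    case False
    define a where "a = cost p n"
    have a0: "a \<ge> 0" using cost_nonneg by (simp add: a_def)
    define K where "K = {k. k < n \<and> cost p k \<le> a/2}"
    have "0 \<in> K" using False a0 by (simp add: K_def cost_def)
    have fin: "finite K" by (simp add: K_def)
    define k where "k = Max K"
    have kK: "k \<in> K" using fin \<open>0\<in>K\<close> k_def Max_in by auto
    then have k1: "k < n" "cost p k \<le> a/2" by (auto simp: K_def)
    have k2: "cost p (Suc k) \<ge> a/2"
    proof (cases "Suc k = n")
      case True then show ?thesis using a0 by (simp add: a_def)
    next
      case F: False
      have "Suc k \<notin> K" using Max_ge[OF fin] k_def by fastforce
      then show ?thesis using F k1 by (auto simp: K_def)
    qed
    have csuc: "cost p (Suc k) = cost p k + rho (p k) (p (Suc k))" by (simp add: cost_def)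
    define q where "q = (\<lambda>i. p (Suc k + i))"
    have split: "cost p n = cost p (Suc k) + cost q (n - Suc k)"
      using sum_split_add[where m="Suc k" and l="n - Suc k" and g="\<lambda>i. rho (p i) (p (Suc i))"] k1
      by (simp add: cost_def q_def)
    have IH1: "rho (p 0) (p k) \<le> 2 * cost p k" using less k1 by auto
    have IH2: "rho (q 0) (q (n - Suc k)) \<le> 2 * cost q (n - Suc k)"
      using less.IH[of "n - Suc k" q] less.prems k1 by (auto simp: q_def)
    have qe: "q 0 = p (Suc k)" "q (n - Suc k) = p n" using k1 by (auto simp: q_def)
    have A: "rho (p 0) (p k) \<le> a" using IH1 k1 by simp
    have B: "rho (p (Suc k)) (p n) \<le> a" using IH2 qe split k2 by (simp add: a_def)
    have C: "rho (p k) (p (Suc k)) \<le> a" using csuc split cost_nonneg[of q] cost_nonneg[of p k]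
      by (simp add: a_def)
    have "rho (p 0) (p n) \<le> 2 * max (rho (p 0) (p k)) (max (rho (p k) (p (Suc k))) (rho (p (Suc k)) (p n)))"
      using rtri less.prems k1 by simp
    also have "\<dots> \<le> 2 * a" using A B C by simp
    finally show ?thesis by (simp add: a_def)
  qed
qed

lemma chain_ex:
  assumes "x \<in> M" "y \<in> M"
  shows "chain x y (\<lambda>i. if i = 0 then x else y) 1" "cost (\<lambda>i. if i = 0 then x else y) 1 = rho x y"
  using assms by (auto simp: chain_def cost_def)

lemma bdd: "bdd_below {cost p n | p n. chain x y p n}"
  by (rule bdd_belowI[of _ 0]) (auto simp: cost_nonneg)

lemma D_le_cost: "chain x y p n \<Longrightarrow> D x y \<le> cost p n"
  unfolding D_def by (rule cInf_lower[OF _ bdd]) auto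

lemma D_le_rho: "x \<in> M \<Longrightarrow> y \<in> M \<Longrightarrow> D x y \<le> rho x y"
  using D_le_cost chain_ex by metis

lemma D_ge_cost: "x \<in> M \<Longrightarrow> y \<in> M \<Longrightarrow> (\<And>p n. chain x y p n \<Longrightarrow> t \<le> cost p n) \<Longrightarrow> t \<le> D x y"
  unfolding D_def by (rule cInf_greatest) (use chain_ex in blast)+

lemma D_ge_rho: "x \<in> M \<Longrightarrow> y \<in> M \<Longrightarrow> rho x y / 2 \<le> D x y"
proof (rule D_ge_cost)
  fix p n assume "chain x y p n"
  then show "rho x y / 2 \<le> cost p n" using frink[of n p] by (auto simp: chain_def)
qed

lemma D_nonneg: "x \<in> M \<Longrightarrow> y \<in> M \<Longrightarrow> 0 \<le> D x y"
  by (rule D_ge_cost) (auto simp: cost_nonneg)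

lemma D_sym_le: assumes "x \<in> M" "y \<in> M" shows "D y x \<le> D x y"
proof (rule D_ge_cost[OF assms])
  fix p n assume ch: "chain x y p n"
  have "chain y x (\<lambda>i. p (n - i)) n" using ch by (auto simp: chain_def)
  moreover have "cost (\<lambda>i. p (n - i)) n = cost p n"
  proof -
    have "cost (\<lambda>i. p (n - i)) n = (\<Sum>i<n. rho (p (Suc (n - Suc i))) (p (n - Suc i)))"
      unfolding cost_def by (intro sum.cong) (auto simp: Suc_diff_Suc)
    also have "\<dots> = (\<Sum>i<n. rho (p (n - Suc i)) (p (Suc (n - Suc i))))" by (simp add: rsym)
    also have "\<dots> = cost p n" unfolding cost_def by (rule sum.nat_diff_reindex)
    finally show ?thesis .
  qed
  ultimately show "D y x \<le> cost p n" using D_le_cost by metis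
qed

lemma D_sym: "x \<in> M \<Longrightarrow> y \<in> M \<Longrightarrow> D x y = D y x"
  using D_sym_le by (meson order_antisym)

lemma D_tri: assumes xyz: "x \<in> M" "y \<in> M" "z \<in> M" shows "D x z \<le> D x y + D y z"
proof -
  have key: "D x z \<le> cost p n + cost q m" if p: "chain x y p n" and q: "chain y z q m" for p n q m
  proof -
    define r where "r i = (if i \<le> n then p i else q (i - n))" for i
    have "chain x z r (n+m)" using p q by (auto simp: chain_def r_def)
    moreover have "cost r (n+m) = cost p n + cost q m"
    proof -
      have 1: "(\<Sum>i<n. rho (r i) (r (Suc i))) = cost p n"
        unfolding cost_def by (intro sum.cong) (auto simp: r_def)
      have 2: "(\<Sum>i<m. rho (r (n+i)) (r (Suc (n+i)))) = cost q m"
        unfolding cost_def using p q by (intro sum.cong) (auto simp: r_def chain_def)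
      show ?thesis using sum_split_add[where m=n and l=m and g="\<lambda>i. rho (r i) (r (Suc i))"] 1 2
        by (simp add: cost_def)
    qed
    ultimately show ?thesis using D_le_cost by metis
  qed
  have "D x z - D y z \<le> D x y"
  proof (rule D_ge_cost[OF xyz(1,2)])
    fix p n assume p: "chain x y p n"
    have "D x z - cost p n \<le> D y z"
      by (rule D_ge_cost[OF xyz(2,3)]) (use key p in force)
    then show "D x z - D y z \<le> cost p n" by simp
  qed
  then show ?thesis by simp
qed

lemma D_zero: "x \<in> M \<Longrightarrow> D x x = 0"
  using D_le_rho D_nonneg rzero by (metis order_antisym)

end


sublocale expsetup2 \<subseteq> R: frink M rho
  by unfold_locales (auto simp: rho_nonneg rho_sym rho_pos rho_tri)

context expsetup2 begin

definition dd where
  "dd x y = (if x \<in> M \<and> y \<in> M then (SUP n::int. s^(nat \<bar>n\<bar>) * R.D (F n x) (F n y)) else 0)"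

lemma D_le1: "x \<in> M \<Longrightarrow> y \<in> M \<Longrightarrow> R.D x y \<le> 1"
  using R.D_le_rho rho_le1 order_trans by blast

lemma term_nonneg: "x \<in> M \<Longrightarrow> y \<in> M \<Longrightarrow> 0 \<le> s^(nat \<bar>n\<bar>) * R.D (F n x) (F n y)"
  using s0 R.D_nonneg F_in by simp

lemma term_le1: "x \<in> M \<Longrightarrow> y \<in> M \<Longrightarrow> s^(nat \<bar>n\<bar>) * R.D (F n x) (F n y) \<le> 1"
proof -
  assume a: "x \<in> M" "y \<in> M"
  have "s^(nat \<bar>n\<bar>) \<le> 1" using s0 s1 by (simp add: power_le_one)
  moreover have "R.D (F n x) (F n y) \<le> 1" "0 \<le> R.D (F n x) (F n y)"
    using D_le1 R.D_nonneg F_in a by auto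
  ultimately show ?thesis using s0 by (simp add: mult_le_one)
qed

lemma term_bdd: "x \<in> M \<Longrightarrow> y \<in> M \<Longrightarrow> bdd_above (range (\<lambda>n::int. s^(nat \<bar>n\<bar>) * R.D (F n x) (F n y)))"
  using term_le1 by (intro bdd_aboveI[of _ 1]) auto

lemma dd_ge_term: "x \<in> M \<Longrightarrow> y \<in> M \<Longrightarrow> s^(nat \<bar>n\<bar>) * R.D (F n x) (F n y) \<le> dd x y"
proof -
  assume a: "x \<in> M" "y \<in> M"
  show ?thesis unfolding dd_def using a cSUP_upper[OF UNIV_I term_bdd[OF a]] by simp
qed

lemma dd_le: "x \<in> M \<Longrightarrow> y \<in> M \<Longrightarrow> (\<And>n::int. s^(nat \<bar>n\<bar>) * R.D (F n x) (F n y) \<le> t) \<Longrightarrow> dd x y \<le> t"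
  unfolding dd_def by (simp add: cSUP_least)

lemma dd_ge_D: "x \<in> M \<Longrightarrow> y \<in> M \<Longrightarrow> R.D x y \<le> dd x y"
  using dd_ge_term[of x y 0] by simp

lemma dd_le1: "x \<in> M \<Longrightarrow> y \<in> M \<Longrightarrow> dd x y \<le> 1"
  using dd_le term_le1 by blast

lemma dd_nonneg: "0 \<le> dd x y"
  using dd_ge_D R.D_nonneg by (metis dd_def order_trans order_refl)

lemma dd_metric: "Metric_space M dd"
proof
  fix x y show "0 \<le> dd x y" by (rule dd_nonneg)
  show "dd x y = dd y x" unfolding dd_def using R.D_sym F_in by auto
next
  fix x y assume xy: "x \<in> M" "y \<in> M"
  show "dd x y = 0 \<longleftrightarrow> x = y"
  proof
    assume "dd x y = 0"
    then have "R.D x y \<le> 0" using dd_ge_D xy by fastforce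
    then have "rho x y \<le> 0" using R.D_ge_rho xy by fastforce
    then show "x = y" using rho_pos by (meson not_le)
  next
    assume "x = y"
    then have "dd x y \<le> 0" using xy by (intro dd_le) (simp_all add: R.D_zero F_in)
    then show "dd x y = 0" using dd_nonneg by (meson order_antisym)
  qed
next
  fix x y z assume xyz: "x \<in> M" "y \<in> M" "z \<in> M"
  show "dd x z \<le> dd x y + dd y z"
  proof (rule dd_le[OF xyz(1,3)])
    fix n :: int
    have "s^(nat \<bar>n\<bar>) * R.D (F n x) (F n z) \<le> s^(nat \<bar>n\<bar>) * (R.D (F n x) (F n y) + R.D (F n y) (F n z))"
      using R.D_tri F_in xyz s0 by (simp add: mult_left_mono)
    also have "\<dots> \<le> dd x y + dd y z"
      using dd_ge_term[OF xyz(1,2), of n] dd_ge_term[OF xyz(2,3), of n] by (simp add: distrib_left)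
    finally show "s^(nat \<bar>n\<bar>) * R.D (F n x) (F n z) \<le> dd x y + dd y z" .
  qed
qed

lemma wshift: "nat \<bar>m\<bar> \<le> Suc (nat \<bar>n::int\<bar>) \<Longrightarrow> s^(nat \<bar>n\<bar>) \<le> s^(nat \<bar>m\<bar>) / s"
proof -
  assume a: "nat \<bar>m\<bar> \<le> Suc (nat \<bar>n\<bar>)"
  have "s^(Suc (nat \<bar>n\<bar>)) \<le> s^(nat \<bar>m\<bar>)" using a s0 s1 by (intro power_decreasing) auto
  then show ?thesis using s0 by (simp add: field_simps)
qed

lemma lip_f: assumes "x \<in> M" "y \<in> M" shows "dd (f x) (f y) \<le> (1/s) * dd x y"
proof -
  have fM: "f x \<in> M" "f y \<in> M" using bij assms by (auto simp: bij_betw_def)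
  show ?thesis
  proof (rule dd_le[OF fM])
    fix n :: int
    have "s^(nat \<bar>n\<bar>) * R.D (F n (f x)) (F n (f y)) = s^(nat \<bar>n\<bar>) * R.D (F (n+1) x) (F (n+1) y)"
      using F_f assms by simp
    also have "\<dots> \<le> (s^(nat \<bar>n+1\<bar>) / s) * R.D (F (n+1) x) (F (n+1) y)"
      by (rule mult_right_mono[OF wshift]) (use R.D_nonneg F_in assms in auto)
    also have "\<dots> = (1/s) * (s^(nat \<bar>n+1\<bar>) * R.D (F (n+1) x) (F (n+1) y))" by simp
    also have "\<dots> \<le> (1/s) * dd x y"
      using dd_ge_term[OF assms] s0 by (intro mult_left_mono) auto
    finally show "s^(nat \<bar>n\<bar>) * R.D (F n (f x)) (F n (f y)) \<le> (1/s) * dd x y" .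
  qed
qed

lemma lip_fi: assumes "x \<in> M" "y \<in> M" shows "dd (inv_into M f x) (inv_into M f y) \<le> (1/s) * dd x y"
proof -
  have fM: "inv_into M f x \<in> M" "inv_into M f y \<in> M" using inv_maps[OF bij] assms by auto
  show ?thesis
  proof (rule dd_le[OF fM])
    fix n :: int
    have "s^(nat \<bar>n\<bar>) * R.D (F n (inv_into M f x)) (F n (inv_into M f y)) = s^(nat \<bar>n\<bar>) * R.D (F (n-1) x) (F (n-1) y)"
      using F_fi assms by simp
    also have "\<dots> \<le> (s^(nat \<bar>n-1\<bar>) / s) * R.D (F (n-1) x) (F (n-1) y)"
      by (rule mult_right_mono[OF wshift]) (use R.D_nonneg F_in assms in auto)
    also have "\<dots> = (1/s) * (s^(nat \<bar>n-1\<bar>) * R.D (F (n-1) x) (F (n-1) y))" by simp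
    also have "\<dots> \<le> (1/s) * dd x y"
      using dd_ge_term[OF assms] s0 by (intro mult_left_mono) auto
    finally show "s^(nat \<bar>n\<bar>) * R.D (F n (inv_into M f x)) (F n (inv_into M f y)) \<le> (1/s) * dd x y" .
  qed
qed

end


context expsetup2 begin

lemma dd_le_Nn: assumes "x \<in> M" "y \<in> M" "x \<noteq> y" shows "dd x y \<le> s^(Nn x y)"
proof (rule dd_le[OF assms(1,2)])
  fix n :: int
  define N where "N = Nn x y"
  have cl: "close (N - nat \<bar>n\<bar>) (F n x) (F n y)" using close_shift close_Nn assms N_def by blast
  have "R.D (F n x) (F n y) \<le> rho (F n x) (F n y)" using R.D_le_rho F_in assms by blast
  also have "\<dots> \<le> s^(2*(N - nat \<bar>n\<bar>))" using rho_le cl F_in assms by blast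
  finally have "s^(nat \<bar>n\<bar>) * R.D (F n x) (F n y) \<le> s^(nat \<bar>n\<bar>) * s^(2*(N - nat \<bar>n\<bar>))"
    using s0 by (simp add: mult_left_mono)
  also have "\<dots> = s^(nat \<bar>n\<bar> + 2*(N - nat \<bar>n\<bar>))" by (simp add: power_add)
  also have "\<dots> \<le> s^N" using s0 s1 by (intro power_decreasing) auto
  finally show "s^(nat \<bar>n\<bar>) * R.D (F n x) (F n y) \<le> s^(Nn x y)" by (simp add: N_def)
qed

lemma F_cont_metric: "a \<in> M \<Longrightarrow> e > 0 \<Longrightarrow> \<exists>\<delta>>0. \<forall>x. x \<in> M \<and> d0 a x < \<delta> \<longrightarrow> d0 (F k a) (F k x) < e"
  using F_cont[of k] unfolding metric_continuous_map[OF Metric_space_axioms] by blast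

lemma close_nbhd: assumes a: "a \<in> M" shows "\<exists>\<delta>>0. \<forall>x\<in>M. d0 a x < \<delta> \<longrightarrow> close P a x"
proof (induction P)
  case 0 then show ?case by (auto simp: close_def intro: exI[of _ 1])
next
  case (Suc P)
  obtain \<delta>1 where d1: "\<delta>1 > 0" "\<forall>x\<in>M. d0 a x < \<delta>1 \<longrightarrow> close P a x" using Suc by blast
  obtain \<delta>2 where d2: "\<delta>2 > 0" "\<forall>x. x \<in> M \<and> d0 a x < \<delta>2 \<longrightarrow> d0 (F (int P) a) (F (int P) x) < c/2"
    using F_cont_metric[OF a, of "c/2" "int P"] cpos by auto
  obtain \<delta>3 where d3: "\<delta>3 > 0" "\<forall>x. x \<in> M \<and> d0 a x < \<delta>3 \<longrightarrow> d0 (F (- int P) a) (F (- int P) x) < c/2"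
    using F_cont_metric[OF a, of "c/2" "- int P"] cpos by auto
  show ?case
  proof (intro exI[of _ "min \<delta>1 (min \<delta>2 \<delta>3)"] conjI ballI impI)
    show "0 < min \<delta>1 (min \<delta>2 \<delta>3)" using d1 d2 d3 by simp
  next
    fix x assume x: "x \<in> M" "d0 a x < min \<delta>1 (min \<delta>2 \<delta>3)"
    show "close (Suc P) a x" unfolding close_def
    proof (intro allI impI)
      fix k :: int assume k: "\<bar>k\<bar> < int (Suc P)"
      then consider "\<bar>k\<bar> < int P" | "k = int P" | "k = - int P" by linarith
      then show "d0 (F k a) (F k x) \<le> c/2"
      proof cases
        case 1 then show ?thesis using d1 x unfolding close_def by auto
      next
        case 2 then show ?thesis using d2 x by force
      next
        case 3 then show ?thesis using d3 x by force
      qed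
    qed
  qed
qed

lemma dd_topology: "Metric_space.mtopology M dd = mtopology"
proof -
  interpret DD: Metric_space M dd by (rule dd_metric)
  have "continuous_map mtopology DD.mtopology id"
    unfolding metric_continuous_map[OF dd_metric]
  proof (intro conjI ballI allI impI)
    show "id ` M \<subseteq> M" by simp
  next
    fix a e assume a: "a \<in> M" and e: "(e::real) > 0"
    obtain P where P: "s^P < e" using real_arch_pow_inv[OF e s1] by blast
    obtain \<delta> where d: "\<delta> > 0" "\<forall>x\<in>M. d0 a x < \<delta> \<longrightarrow> close P a x" using close_nbhd[OF a] by blast
    show "\<exists>\<delta>>0. \<forall>x. x \<in> M \<and> d0 a x < \<delta> \<longrightarrow> dd (id a) (id x) < e"
    proof (intro exI[of _ \<delta>] conjI allI impI)
      fix x assume x: "x \<in> M \<and> d0 a x < \<delta>"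
      show "dd (id a) (id x) < e"
      proof (cases "a = x")
        case True then show ?thesis using e DD.zero x by simp
      next
        case False
        have "P \<le> Nn a x" using Nn_ge a x d False by blast
        then have "s^(Nn a x) \<le> s^P" using s0 s1 by simp
        then show ?thesis using dd_le_Nn[OF a _ False] x P by simp
      qed
    qed (use d in auto)
  qed
  then have "homeomorphic_map mtopology DD.mtopology id"
    by (intro continuous_imp_homeomorphic_map) (auto simp: cpt DD.Hausdorff_space_mtopology)
  then show ?thesis using homeomorphic_map_id by blast
qed

lemma hyp: "\<exists>\<delta>1>0. \<forall>x\<in>M. \<forall>y\<in>M. x \<noteq> y \<and> dd x y \<le> \<delta>1 \<longrightarrow>
   dd x y \<le> s * max (dd (f x) (f y)) (dd (inv_into M f x) (inv_into M f y))"
proof -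
  obtain N1 where N1: "s^N1 < 1/2" using real_arch_pow_inv[of "1/2" s] s1 by auto
  define \<delta>1 where "\<delta>1 = s^(2*N1)/2"
  have "\<delta>1 > 0" using s0 by (simp add: \<delta>1_def)
  moreover have "dd x y \<le> s * max (dd (f x) (f y)) (dd (inv_into M f x) (inv_into M f y))"
    if x: "x \<in> M" and y: "y \<in> M" and xy: "x \<noteq> y" and small: "dd x y \<le> \<delta>1" for x y
  proof -
    define N where "N = Nn x y"
    define Mx where "Mx = max (dd (f x) (f y)) (dd (inv_into M f x) (inv_into M f y))"
    have fM: "f x \<in> M" "f y \<in> M" using bij x y by (auto simp: bij_betw_def)
    have fiM: "inv_into M f x \<in> M" "inv_into M f y \<in> M" using inv_maps[OF bij] x y by auto
    have rxy: "rho x y = s^(2*N)" using xy by (simp add: rho_def N_def)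
    have "s^(2*N)/2 \<le> dd x y" using R.D_ge_rho[OF x y] dd_ge_D[OF x y] rxy by simp
    then have "s^(2*N) \<le> s^(2*N1)" using small by (simp add: \<delta>1_def)
    then have "N1 \<le> N" using s0 s1 by simp
    then have "s^N \<le> s^N1" using s0 s1 by (intro power_decreasing) auto
    then have sN: "s^N < 1/2" using N1 by linarith
    then have N0: "N \<noteq> 0" by (cases "N = 0") auto
    obtain e where e: "\<bar>e\<bar> = int N" "d0 (F e x) (F e y) > c/2" using Nn_ex[OF x y xy] N_def by blast
    have e0: "e \<noteq> 0" using e N0 by auto
    have eM: "F e x \<in> M" "F e y \<in> M" using F_in x y by auto
    have ne: "F e x \<noteq> F e y" using e cpos eM by auto
    have "Nn (F e x) (F e y) \<le> 0" unfolding Nn_def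
      by (rule Least_le) (use e eM F_comp in \<open>intro exI[of _ 0], auto\<close>)
    then have "rho (F e x) (F e y) = 1" using ne by (simp add: rho_def)
    then have De: "R.D (F e x) (F e y) \<ge> 1/2" using R.D_ge_rho[OF eM] by simp
    have nat_e: "nat \<bar>e\<bar> = N" using e by simp
    have "R.D x y \<le> s^(2*N)" using R.D_le_rho[OF x y] rxy by simp
    also have "\<dots> = s^N * s^N" by (simp add: power_add[symmetric] mult_2)
    also have "\<dots> \<le> s^N * (1/2)" using sN s0 by (intro mult_left_mono) auto
    also have "\<dots> \<le> s^(nat \<bar>e\<bar>) * R.D (F e x) (F e y)" unfolding nat_e using De s0 by (intro mult_left_mono) auto
    finally have T: "R.D x y \<le> s^(nat \<bar>e\<bar>) * R.D (F e x) (F e y)" .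
    have nz: "s^(nat \<bar>n\<bar>) * R.D (F n x) (F n y) \<le> s * Mx" if n0: "n \<noteq> 0" for n
    proof (cases "n > 0")
      case True
      have eq: "nat \<bar>n\<bar> = Suc (nat \<bar>n-1\<bar>)" using True by simp
      have "s^(nat \<bar>n\<bar>) * R.D (F n x) (F n y) = s * (s^(nat \<bar>n-1\<bar>) * R.D (F (n-1) (f x)) (F (n-1) (f y)))"
      proof -
        have p: "s^(nat \<bar>n\<bar>) = s * s^(nat \<bar>n-1\<bar>)" unfolding eq by simp
        have "F (n-1) (f x) = F n x" "F (n-1) (f y) = F n y" using F_f x y by auto
        then show ?thesis unfolding p by simp
      qed
      also have "\<dots> \<le> s * dd (f x) (f y)" using dd_ge_term[OF fM] s0 by (intro mult_left_mono) auto
      also have "\<dots> \<le> s * Mx" using s0 by (simp add: Mx_def)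
      finally show ?thesis .
    next
      case False
      then have eq: "nat \<bar>n\<bar> = Suc (nat \<bar>n+1\<bar>)" using n0 by simp
      have "s^(nat \<bar>n\<bar>) * R.D (F n x) (F n y) = s * (s^(nat \<bar>n+1\<bar>) * R.D (F (n+1) (inv_into M f x)) (F (n+1) (inv_into M f y)))"
      proof -
        have p: "s^(nat \<bar>n\<bar>) = s * s^(nat \<bar>n+1\<bar>)" unfolding eq by simp
        have "F (n+1) (inv_into M f x) = F n x" "F (n+1) (inv_into M f y) = F n y" using F_fi x y by auto
        then show ?thesis unfolding p by simp
      qed
      also have "\<dots> \<le> s * dd (inv_into M f x) (inv_into M f y)" using dd_ge_term[OF fiM] s0 by (intro mult_left_mono) auto
      also have "\<dots> \<le> s * Mx" using s0 by (simp add: Mx_def)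
      finally show ?thesis .
    qed
    have "dd x y \<le> s * Mx"
    proof (rule dd_le[OF x y])
      fix n :: int
      show "s^(nat \<bar>n\<bar>) * R.D (F n x) (F n y) \<le> s * Mx"
      proof (cases "n = 0")
        case True then show ?thesis using T nz[OF e0] by simp
      next
        case False then show ?thesis using nz by blast
      qed
    qed
    then show ?thesis by (simp add: Mx_def)
  qed
  ultimately show ?thesis by blast
qed

end


lemma dW'_upper:
  assumes ms: "Metric_space M d" and lf: "lipschitz_on_metric M d f" and lg: "lipschitz_on_metric M d g"
    and u: "u \<in> M" and v: "v \<in> M" and uv: "u \<noteq> v"
  shows "\<bar>d (f u) (f v) - d (g u) (g v)\<bar> / d u v \<le> dW' M d f g"
proof -
  interpret Metric_space M d by (rule ms)
  obtain Lf where Lf: "\<forall>x\<in>M. \<forall>y\<in>M. d (f x) (f y) \<le> Lf * d x y" using lf by (auto simp: lipschitz_on_metric_def)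
  obtain Lg where Lg: "\<forall>x\<in>M. \<forall>y\<in>M. d (g x) (g y) \<le> Lg * d x y" using lg by (auto simp: lipschitz_on_metric_def)
  define P where "P = {(x,y). x \<in> M \<and> y \<in> M \<and> x \<noteq> y}"
  define \<phi> where "\<phi> p = \<bar>d (f (fst p)) (f (snd p)) - d (g (fst p)) (g (snd p))\<bar> / d (fst p) (snd p)" for p
  have bdd: "bdd_above (\<phi> ` P)"
  proof (rule bdd_aboveI[of _ "Lf + Lg"])
    fix t assume "t \<in> \<phi> ` P"
    then obtain x y where xy: "x \<in> M" "y \<in> M" "x \<noteq> y" "t = \<phi> (x,y)" by (auto simp: P_def)
    have dpos: "d x y > 0" using xy by (simp add: less_le)
    have "\<bar>d (f x) (f y) - d (g x) (g y)\<bar> \<le> d (f x) (f y) + d (g x) (g y)"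
      using nonneg[of "f x" "f y"] nonneg[of "g x" "g y"] by (simp add: abs_le_iff)
    also have "\<dots> \<le> (Lf + Lg) * d x y" using Lf Lg xy by (simp add: distrib_right add_mono)
    finally show "t \<le> Lf + Lg" using xy dpos by (simp add: \<phi>_def pos_divide_le_eq)
  qed
  have "(u,v) \<in> P" using u v uv by (simp add: P_def)
  then have "\<phi> (u,v) \<le> (SUP p\<in>P. \<phi> p)" using bdd by (rule cSUP_upper)
  then show ?thesis unfolding dW'_def P_def \<phi>_def by simp
qed

lemma dW'_nonneg:
  assumes ms: "Metric_space M d" and lf: "lipschitz_on_metric M d f" and lg: "lipschitz_on_metric M d g"
    and u: "u \<in> M" and v: "v \<in> M" and uv: "u \<noteq> v"
  shows "0 \<le> dW' M d f g"
proof -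
  have "0 \<le> \<bar>d (f u) (f v) - d (g u) (g v)\<bar> / d u v" using Metric_space.nonneg[OF ms] by simp
  then show ?thesis using dW'_upper[OF assms] by linarith
qed

lemma sup_nonneg:
  assumes "x0 \<in> A" "\<forall>x\<in>A. 0 \<le> h x \<and> h x \<le> (1::real)"
  shows "0 \<le> (SUP x\<in>A. h x)"
proof -
  have "bdd_above (h ` A)" using assms by (intro bdd_aboveI[of _ 1]) auto
  then have "h x0 \<le> (SUP x\<in>A. h x)" using assms(1) by (rule cSUP_upper[rotated])
  then show ?thesis using assms by force
qed

lemma robust:
  assumes ms: "Metric_space M d"
    and dle1: "\<forall>x\<in>M. \<forall>y\<in>M. d x y \<le> 1"
    and bf: "bilip_homeo M d f" and bg: "bilip_homeo M d g"
    and hyp: "\<forall>x\<in>M. \<forall>y\<in>M. x \<noteq> y \<and> d x y \<le> \<delta>1 \<longrightarrow>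
         d x y \<le> s * max (d (f x) (f y)) (d (inv_into M f x) (inv_into M f y))"
    and s0: "0 < s" and s1: "s < 1" and d1: "\<delta>1 > 0"
    and small: "dW M d f g < (1/s - 1)/2"
  shows "expansive_const M d g \<delta>1"
  unfolding expansive_const_def
proof (intro conjI d1 ballI impI)
  interpret Metric_space M d by (rule ms)
  fix x y assume x: "x \<in> M" and y: "y \<in> M"
    and bnd: "\<forall>n::int. d (iter_int M g n x) (iter_int M g n y) \<le> \<delta>1"
  show "x = y"
  proof (rule ccontr)
    assume xy: "x \<noteq> y"
    define \<epsilon> where "\<epsilon> = (1/s - 1)/2"
    define \<mu> where "\<mu> = (1/s + 1)/2"
    have mu1: "\<mu> > 1" using s0 s1 by (simp add: \<mu>_def field_simps)
    have bijf: "bij_betw f M M" and lf: "lipschitz_on_metric M d f"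
      and lfi: "lipschitz_on_metric M d (inv_into M f)" using bf by (auto simp: bilip_homeo_def)
    have bijg: "bij_betw g M M" and lg: "lipschitz_on_metric M d g"
      and lgi: "lipschitz_on_metric M d (inv_into M g)" using bg by (auto simp: bilip_homeo_def)
    have fM: "\<And>u. u \<in> M \<Longrightarrow> f u \<in> M" "\<And>u. u \<in> M \<Longrightarrow> g u \<in> M" using bijf bijg by (auto simp: bij_betw_def)
    have fiM: "\<And>u. u \<in> M \<Longrightarrow> inv_into M f u \<in> M" "\<And>u. u \<in> M \<Longrightarrow> inv_into M g u \<in> M"
      using inv_maps[OF bijf] inv_maps[OF bijg] by auto
    have c0: "0 \<le> dC0 M d f g" unfolding dC0_def
      by (intro add_nonneg_nonneg sup_nonneg[OF x]) (use dle1 fM fiM in auto)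
    have w1: "0 \<le> dW' M d f g" using dW'_nonneg[OF ms lf lg x y xy] .
    have w2: "0 \<le> dW' M d (inv_into M f) (inv_into M g)" using dW'_nonneg[OF ms lfi lgi x y xy] .
    have W1: "dW' M d f g < \<epsilon>" and W2: "dW' M d (inv_into M f) (inv_into M g) < \<epsilon>"
      using small c0 w1 w2 unfolding dW_def \<epsilon>_def by linarith+
    have key: "\<mu> * d u v \<le> max (d (g u) (g v)) (d (inv_into M g u) (inv_into M g v))"
      if u: "u \<in> M" and v: "v \<in> M" and uv: "u \<noteq> v" and sm: "d u v \<le> \<delta>1" for u v
    proof -
      have dpos: "d u v > 0" using u v uv by (simp add: less_le)
      have "\<bar>d (f u) (f v) - d (g u) (g v)\<bar> / d u v < \<epsilon>" using dW'_upper[OF ms lf lg u v uv] W1 by linarith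
      then have g1: "d (g u) (g v) \<ge> d (f u) (f v) - \<epsilon> * d u v" using dpos by (simp add: divide_less_eq abs_less_iff)
      have "\<bar>d (inv_into M f u) (inv_into M f v) - d (inv_into M g u) (inv_into M g v)\<bar> / d u v < \<epsilon>"
        using dW'_upper[OF ms lfi lgi u v uv] W2 by linarith
      then have g2: "d (inv_into M g u) (inv_into M g v) \<ge> d (inv_into M f u) (inv_into M f v) - \<epsilon> * d u v"
        using dpos by (simp add: divide_less_eq abs_less_iff)
      have "d u v \<le> s * max (d (f u) (f v)) (d (inv_into M f u) (inv_into M f v))" using hyp u v uv sm by blast
      then have "(1/s) * d u v \<le> max (d (f u) (f v)) (d (inv_into M f u) (inv_into M f v))"
        using s0 by (simp add: field_simps)
      moreover have "\<mu> = 1/s - \<epsilon>" by (simp add: \<mu>_def \<epsilon>_def field_simps)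
      ultimately show ?thesis using g1 g2 by (simp add: left_diff_distrib max_def split: if_splits)
    qed
    define a where "a n = d (iter_int M g n x) (iter_int M g n y)" for n
    have bdd: "bdd_above (range a)" using bnd by (intro bdd_aboveI[of _ \<delta>1]) (auto simp: a_def)
    define S where "S = (SUP n. a n)"
    have aS: "a n \<le> S" for n unfolding S_def using bdd by (simp add: cSUP_upper)
    have a0: "a 0 > 0" using x y xy by (simp add: a_def less_le)
    then have Spos: "S > 0" using aS[of 0] by linarith
    have "S / \<mu> < S" using Spos mu1 by (simp add: divide_less_eq)
    then obtain n where n: "S / \<mu> < a n" unfolding S_def using less_cSUP_iff[OF _ bdd] by auto
    define u where "u = iter_int M g n x"
    define v where "v = iter_int M g n y"
    have uM: "u \<in> M" "v \<in> M" using iter_int_in[OF bijg] x y by (auto simp: u_def v_def)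
    have apos: "a n > 0" using n Spos mu1 by (smt (verit) divide_pos_pos)
    then have uv: "u \<noteq> v" using uM by (auto simp: a_def u_def v_def)
    have "\<mu> * a n \<le> max (d (g u) (g v)) (d (inv_into M g u) (inv_into M g v))"
      using key[OF uM uv] bnd by (simp add: a_def u_def v_def)
    also have "\<dots> = max (a (n+1)) (a (n-1))"
      using iter_int_succ[OF bijg x] iter_int_succ[OF bijg y] iter_int_pred[OF bijg x] iter_int_pred[OF bijg y]
      by (simp add: a_def u_def v_def)
    also have "\<dots> \<le> S" using aS by simp
    finally have "\<mu> * a n \<le> S" .
    moreover have "S < \<mu> * a n" using n mu1 by (simp add: divide_less_eq mult.commute)
    ultimately show False by simp
  qed
qed



theorem mainTheorem2:
  fixes X :: "'a topology" and f :: "'a \<Rightarrow> 'a"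
  assumes "compact_space X" and "metrizable_space X" and "expansive_homeo X f"
  shows "\<exists>d. Metric_space (topspace X) d \<and> Metric_space.mtopology (topspace X) d = X \<and>
             bilip_homeo (topspace X) d f \<and>
             (\<exists>\<epsilon>>0. \<exists>\<delta>>0. \<forall>g. bilip_homeo (topspace X) d g \<and> dW (topspace X) d f g < \<epsilon>
                 \<longrightarrow> expansive_const (topspace X) d g \<delta>)"
proof -
  define M where "M = topspace X"
  have hm: "homeomorphic_map X X f" using assms(3) by (simp add: expansive_homeo_def)
  obtain d0 c where ms0: "Metric_space M d0" and top0: "Metric_space.mtopology M d0 = X"
    and ec: "expansive_const M d0 f c"
    using assms(3) unfolding expansive_homeo_def M_def by blast
  interpret M0: Metric_space M d0 by (rule ms0)
  have bij: "bij_betw f M M"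
    using homeomorphic_imp_surjective_map[OF hm] homeomorphic_imp_injective_map[OF hm]
    by (simp add: bij_betw_def M_def)
  have contf: "continuous_map X X f" using homeomorphic_imp_continuous_map[OF hm] .
  obtain g0 where g0: "homeomorphic_maps X X f g0" using hm homeomorphic_map_maps by blast
  have contfi: "continuous_map X X (inv_into M f)"
  proof (rule continuous_map_eq)
    show "continuous_map X X g0" using g0 by (simp add: homeomorphic_maps_def)
  next
    fix y assume y: "y \<in> topspace X"
    have "f (g0 y) = y" "g0 y \<in> M" using g0 y unfolding homeomorphic_maps_def M_def
      by (auto simp: continuous_map_def)
    then show "g0 y = inv_into M f y" using bij by (metis bij_betw_def inv_into_f_f)
  qed
  interpret E: expsetup M d0 f c
    by unfold_locales (use bij contf contfi assms(1) ec top0 in auto)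
  obtain M0 where M0: "\<forall>x\<in>M. \<forall>y\<in>M. (\<forall>k::int. \<bar>k\<bar> \<le> int M0 \<longrightarrow> d0 (E.F k x) (E.F k y) \<le> c) \<longrightarrow> d0 x y \<le> c/2"
    using E.unif[of "c/2"] E.cpos by auto
  define s :: real where "s = 1 - 1/(8*M0+2)"
  have s0: "0 < s" and s1: "s < 1" by (auto simp: s_def field_simps)
  have sM: "s^(4*M0) \<ge> 1/2"
  proof -
    have A: "1 + real (4*M0) * (- 1/(8*M0+2)) \<le> (1 + (- 1/(8*M0+2)))^(4*M0)"
      by (rule Bernoulli_inequality) (simp add: field_simps)
    have eq: "1 + (- 1/(8*M0+2)) = s" by (simp add: s_def)
    have B: "1/2 \<le> 1 + real (4*M0) * (- 1/(8*M0+2))" by (simp add: field_simps)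
    show ?thesis using A[unfolded eq] B by linarith
  qed
  interpret E2: expsetup2 M d0 f c M0 s
    by unfold_locales (use M0 s0 s1 sM in auto)
  obtain \<delta>1 where d1: "\<delta>1 > 0" and hyp: "\<forall>x\<in>M. \<forall>y\<in>M. x \<noteq> y \<and> E2.dd x y \<le> \<delta>1 \<longrightarrow>
     E2.dd x y \<le> s * max (E2.dd (f x) (f y)) (E2.dd (inv_into M f x) (inv_into M f y))"
    using E2.hyp by blast
  have bf: "bilip_homeo M E2.dd f"
    unfolding bilip_homeo_def lipschitz_on_metric_def
    using bij E2.lip_f E2.lip_fi by blast
  have "Metric_space M E2.dd \<and> Metric_space.mtopology M E2.dd = X \<and> bilip_homeo M E2.dd f \<and>
             (\<exists>\<epsilon>>0. \<exists>\<delta>>0. \<forall>g. bilip_homeo M E2.dd g \<and> dW M E2.dd f g < \<epsilon>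
                 \<longrightarrow> expansive_const M E2.dd g \<delta>)"
  proof (intro conjI)
    show "Metric_space M E2.dd" by (rule E2.dd_metric)
    show "Metric_space.mtopology M E2.dd = X" using E2.dd_topology top0 by simp
    show "bilip_homeo M E2.dd f" by (rule bf)
    show "\<exists>\<epsilon>>0. \<exists>\<delta>>0. \<forall>g. bilip_homeo M E2.dd g \<and> dW M E2.dd f g < \<epsilon>
                 \<longrightarrow> expansive_const M E2.dd g \<delta>"
    proof -
      have e0: "0 < (1/s - 1)/2" using s0 s1 by (simp add: field_simps)
      have "\<forall>g. bilip_homeo M E2.dd g \<and> dW M E2.dd f g < (1/s - 1)/2 \<longrightarrow> expansive_const M E2.dd g \<delta>1"
      proof (intro allI impI)
        fix g assume g: "bilip_homeo M E2.dd g \<and> dW M E2.dd f g < (1/s - 1)/2"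
        show "expansive_const M E2.dd g \<delta>1"
          by (rule robust[OF E2.dd_metric _ bf _ hyp s0 s1 d1]) (use g E2.dd_le1 in auto)
      qed
      then show ?thesis using e0 d1 by blast
    qed
  qed
  then show ?thesis unfolding M_def by blast
qed


end
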